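(* Let $\mathbb{E}$ be a countable subset of $\mathbb{R}$ with $0\in\mathbb{E}$, and let $\mathcal{V}$ be a closed $\mathbb{E}$-vine over a Polish space $X$. If $\mathcal{V}$ is well founded, then $o(\mathcal{V})<\omega_1$.
   Context: For finite $G\subset\mathbb{N}$, $[\mathbb{E},G]=\{f:\mathbb{N}\to\mathbb{E}:\mathrm{supp}(f)\subset G\}$. An $\mathbb{E}$-bunch over $X$ is an element $(x_f)_{f\in[\mathbb{E},G]}\in X^{[\mathbb{E},G]}$, $G$ finite. For $\chi=(x_f)_{f\in[\mathbb{E},F]}$, $\psi=(y_f)_{f\in[\mathbb{E},G]}$, $\chi\preceq\psi$ means $F$ is an initial segment of $G$ and $y_f=x_f$ for $f\in[\mathbb{E},F]$. An $\mathbb{E}$-vine is a set $\mathcal{V}$ of $\mathbb{E}$-bunches closed under $\preceq$-predecessors; it is well founded if it has no infinite $\preceq$-chain; it is closed if $\mathcal{V}\cap X^{[\mathbb{E},G]}$ is closed in the product topology of $X^{[\mathbb{E},G]}$ for every finite $G$. Derivatives: $\mathcal{V}^{(1)}=\mathcal{V}\setminus\{\chi\in\mathcal{V}:\chi\text{ is }\preceq\text{-maximal}\}$, $\mathcal{V}^{(\alpha+1)}=(\mathcal{V}^{(\alpha)})^{(1)}$, $\mathcal{V}^{(\alpha)}=\bigcap_{\beta<\alpha}\mathcal{V}^{(\beta)}$ for limit $\alpha$; the index is $o(\mathcal{V})=\min\{\alpha:\mathcal{V}^{(\alpha)}=\emptyset\}$. *)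

theory Defs
  imports "HOL-Analysis.Analysis"
begin

definition EG :: "real set \<Rightarrow> nat set \<Rightarrow> (nat \<Rightarrow> real) set" where
  "EG E G = {f. (\<forall>n. f n \<in> E) \<and> {n. f n \<noteq> 0} \<subseteq> G}"

text \<open>A bunch is a pair (G, x) with x an element of X^[E,G], represented as an
  extensional function on [E,G] (the carrier of the product topology).\<close>
type_synonym 'a bunch = "nat set \<times> ((nat \<Rightarrow> real) \<Rightarrow> 'a)"

definition is_bunch :: "real set \<Rightarrow> 'a bunch \<Rightarrow> bool" where
  "is_bunch E c \<longleftrightarrow> finite (fst c) \<and> snd c \<in> extensional (EG E (fst c))"

definition initial_segment :: "nat set \<Rightarrow> nat set \<Rightarrow> bool" where
  "initial_segment F G \<longleftrightarrow> F \<subseteq> G \<and> (\<forall>a\<in>F. \<forall>b\<in>G. b < a \<longrightarrow> b \<in> F)"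

definition bunch_le :: "real set \<Rightarrow> 'a bunch \<Rightarrow> 'a bunch \<Rightarrow> bool" where
  "bunch_le E c p \<longleftrightarrow> initial_segment (fst c) (fst p) \<and>
     (\<forall>f\<in>EG E (fst c). snd p f = snd c f)"

definition is_vine :: "real set \<Rightarrow> 'a bunch set \<Rightarrow> bool" where
  "is_vine E V \<longleftrightarrow> (\<forall>c\<in>V. is_bunch E c) \<and>
     (\<forall>p\<in>V. \<forall>c. is_bunch E c \<and> bunch_le E c p \<longrightarrow> c \<in> V)"

definition vine_well_founded :: "real set \<Rightarrow> 'a bunch set \<Rightarrow> bool" where
  "vine_well_founded E V \<longleftrightarrow>
     \<not> (\<exists>C. C \<subseteq> V \<and> infinite C \<and> (\<forall>c\<in>C. \<forall>p\<in>C. bunch_le E c p \<or> bunch_le E p c))"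

definition vine_closed :: "real set \<Rightarrow> ('a::topological_space) bunch set \<Rightarrow> bool" where
  "vine_closed E V \<longleftrightarrow> (\<forall>G. finite G \<longrightarrow>
     closedin (product_topology (\<lambda>_. euclidean) (EG E G)) {x. (G, x) \<in> V})"

definition vine_deriv :: "real set \<Rightarrow> 'a bunch set \<Rightarrow> 'a bunch set" where
  "vine_deriv E V = V - {c\<in>V. \<not> (\<exists>p\<in>V. bunch_le E c p \<and> p \<noteq> c)}"

text \<open>Ordinals are represented (as in the HOL library) by well-orders. For a
  well-order r, D is the transfinite derivative sequence indexed by Field r:
  the element a of Field r stands for the ordinal = order type of its strict
  initial segment.\<close>
definition immediate_pred :: "'b rel \<Rightarrow> 'b \<Rightarrow> 'b \<Rightarrow> bool" where
  "immediate_pred r b a \<longleftrightarrow> (b, a) \<in> r \<and> b \<noteq> a \<and>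
     (\<forall>c. (b, c) \<in> r \<and> (c, a) \<in> r \<longrightarrow> c = b \<or> c = a)"

definition is_deriv_seq :: "real set \<Rightarrow> 'a bunch set \<Rightarrow> 'b rel \<Rightarrow> ('b \<Rightarrow> 'a bunch set) \<Rightarrow> bool" where
  "is_deriv_seq E V r D \<longleftrightarrow> well_order_on (Field r) r \<and>
     (\<forall>a\<in>Field r.
        (\<forall>b. immediate_pred r b a \<longrightarrow> D a = vine_deriv E (D b)) \<and>
        ((\<nexists>b. immediate_pred r b a) \<longrightarrow>
            D a = V \<inter> \<Inter>{D b | b. (b, a) \<in> r \<and> b \<noteq> a}))"

text \<open>o(V) < omega_1: some countable ordinal alpha has V^(alpha) = {} (then the least one,
  o(V), is countable as well). Countable ordinals = well-orders on subsets of nat.\<close>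
definition index_lt_omega1 :: "real set \<Rightarrow> 'a bunch set \<Rightarrow> bool" where
  "index_lt_omega1 E V \<longleftrightarrow>
     (\<exists>(r::nat rel) D. is_deriv_seq E V r D \<and> (\<exists>a\<in>Field r. D a = {}))"

end

theory Submission
  imports Defs "HOL-Library.Countable"
begin


definition kbl :: "nat list \<Rightarrow> nat list \<Rightarrow> bool" where
  "kbl s t \<longleftrightarrow> (length t < length s \<and> take (length t) s = t) \<or>
     (\<exists>i. i < length s \<and> i < length t \<and> take i s = take i t \<and> s!i < t!i)"

lemma tk1: "take n b = c \<Longrightarrow> i \<le> n \<Longrightarrow> take i b = take i c"
  by auto

lemma tk2: "take n b = take n c \<Longrightarrow> i \<le> n \<Longrightarrow> take i b = take i c"
  by (metis min.absorb1 take_take)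

lemma tk3: "take n b = take n c \<Longrightarrow> i < n \<Longrightarrow> b!i = c!i"
  by (metis nth_take)

lemma kbl_irrefl: "\<not> kbl s s"
  unfolding kbl_def by auto

lemma kblI1: "length t < length s \<Longrightarrow> take (length t) s = t \<Longrightarrow> kbl s t"
  unfolding kbl_def by blast

lemma kblI2: "i < length s \<Longrightarrow> i < length t \<Longrightarrow> take i s = take i t \<Longrightarrow> s!i < t!i \<Longrightarrow> kbl s t"
  unfolding kbl_def by blast

lemma kbl_trans: assumes "kbl a b" "kbl b c" shows "kbl a c"
  using assms[unfolded kbl_def]
proof (elim disjE exE conjE)
  assume h: "length b < length a" "take (length b) a = b" "length c < length b" "take (length c) b = c"
  have "take (length c) a = take (length c) b" by (rule tk1[OF h(2)]) (use h(3) in linarith)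
  then have "take (length c) a = c" using h(4) by (rule trans)
  with h(1,3) show ?thesis by (intro kblI1) linarith+
next
  fix j assume h: "length b < length a" "take (length b) a = b" "j < length b" "j < length c"
    "take j b = take j c" "b ! j < c ! j"
  have 1: "take j a = take j b" by (rule tk1[OF h(2)]) (use h(3) in linarith)
  have 2: "a!j = b!j" by (rule tk3[OF tk1[OF h(2) order.refl]]) (rule h(3))
  show ?thesis
  proof (rule kblI2[of j])
    show "j < length a" using h(1,3) by linarith
    show "j < length c" by (rule h(4))
    show "take j a = take j c" using 1 h(5) by (rule trans)
    show "a!j < c!j" using 2 h(6) by simp
  qed
next
  fix i assume h: "i < length a" "i < length b" "take i a = take i b" "a ! i < b ! i"
    "length c < length b" "take (length c) b = c"
  show ?thesis
  proof (cases "i < length c")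
    case True
    have 1: "take i b = take i c" by (rule tk1[OF h(6)]) (use True in linarith)
    have 2: "b!i = c!i" by (rule tk3[OF tk1[OF h(6) order.refl]]) (rule True)
    show ?thesis
    proof (rule kblI2[of i])
      show "i < length a" by (rule h(1))
      show "i < length c" by (rule True)
      show "take i a = take i c" using h(3) 1 by (rule trans)
      show "a!i < c!i" using 2 h(4) by simp
    qed
  next
    case False
    have 1: "take (length c) a = take (length c) b" by (rule tk2[OF h(3)]) (use False in linarith)
    have 3: "take (length c) a = c" using 1 h(6) by (rule trans)
    show ?thesis using 3 False h(1) by (intro kblI1) linarith+
  qed
next
  fix i j assume h: "i < length a" "i < length b" "take i a = take i b" "a ! i < b ! i"
    "j < length b" "j < length c" "take j b = take j c" "b ! j < c ! j"
  show ?thesis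
  proof (cases i j rule: linorder_cases)
    case less
    have 1: "take i b = take i c" by (rule tk2[OF h(7)]) (use less in linarith)
    have 2: "b!i = c!i" using h(7) less by (rule tk3)
    show ?thesis
    proof (rule kblI2[of i])
      show "i < length a" by (rule h(1))
      show "i < length c" using less h(6) by linarith
      show "take i a = take i c" using h(3) 1 by (rule trans)
      show "a!i < c!i" using 2 h(4) by simp
    qed
  next
    case equal
    show ?thesis
    proof (rule kblI2[of i])
      show "i < length a" by (rule h(1))
      show "i < length c" using equal h(6) by simp
      show "take i a = take i c" using h(3) h(7) equal by simp
      show "a!i < c!i" using h(4) h(8) equal by simp
    qed
  next
    case greater
    have 1: "take j a = take j b" by (rule tk2[OF h(3)]) (use greater in linarith)
    have 2: "a!j = b!j" using h(3) greater by (rule tk3)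
    show ?thesis
    proof (rule kblI2[of j])
      show "j < length a" using greater h(1) by linarith
      show "j < length c" by (rule h(6))
      show "take j a = take j c" using 1 h(7) by (rule trans)
      show "a!j < c!j" using 2 h(8) by simp
    qed
  qed
qed

lemma kbl_asym: "kbl a b \<Longrightarrow> \<not> kbl b a"
  using kbl_trans kbl_irrefl by blast

lemma kbl_total: assumes "a \<noteq> b" shows "kbl a b \<or> kbl b a"
proof (cases "\<exists>i. i < length a \<and> i < length b \<and> a!i \<noteq> b!i")
  case True
  define i where "i = (LEAST i. i < length a \<and> i < length b \<and> a!i \<noteq> b!i)"
  have i: "i < length a" "i < length b" "a!i \<noteq> b!i"
    using LeastI_ex[OF True] unfolding i_def by auto
  have lt: "a!j = b!j" if "j < i" for j
  proof -
    have "\<not> (j < length a \<and> j < length b \<and> a!j \<noteq> b!j)"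
      using not_less_Least[OF that[unfolded i_def]] .
    then show ?thesis using that i by linarith
  qed
  have tk: "take i a = take i b"
    by (rule nth_equalityI) (use i lt in auto)
  show ?thesis
  proof (cases "a!i < b!i")
    case True then show ?thesis using i tk unfolding kbl_def by (intro disjI1 disjI2 exI[of _ i]) auto
  next
    case False then have "b!i < a!i" using i by auto
    then show ?thesis using i tk unfolding kbl_def by (intro disjI2 exI[of _ i]) auto
  qed
next
  case False
  have eq: "take m a = take m b" if "m \<le> length a" "m \<le> length b" for m
    by (rule nth_equalityI) (use False that in auto)
  consider "length a < length b" | "length b < length a" | "length a = length b" by linarith
  then show ?thesis
  proof cases
    case 1
    then have "take (length a) b = a" using eq[of "length a"] by simp
    then show ?thesis using 1 unfolding kbl_def by (intro disjI2 disjI1) auto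
  next
    case 2
    then have "take (length b) a = b" using eq[of "length b"] by simp
    then show ?thesis using 2 unfolding kbl_def by (intro disjI1) auto
  next
    case 3
    then have "a = b" using eq[of "length a"] by simp
    then show ?thesis using assms by blast
  qed
qed


lemma noninc_stab:
  fixes e :: "nat \<Rightarrow> nat"
  assumes "\<And>n. e (Suc n) \<le> e n"
  shows "\<exists>M. \<forall>n\<ge>M. e n = e M"
proof -
  define m where "m = (LEAST v. v \<in> range e)"
  have "m \<in> range e" unfolding m_def by (rule LeastI[of _ "e 0"]) auto
  then obtain M where M: "e M = m" by auto
  have "e n = e M" if "n \<ge> M" for n
  proof -
    have "e n \<le> e M" using that
    proof (induction n rule: dec_induct)
      case base then show ?case by simp
    next
      case (step n) then show ?case using assms[of n] by linarith
    qed
    moreover have "e M \<le> e n" unfolding M m_def by (rule Least_le) auto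
    ultimately show ?thesis by linarith
  qed
  then show ?thesis by blast
qed

lemma kb_no_desc:
  assumes pre: "\<And>s k. s \<in> P \<Longrightarrow> take k s \<in> P"
    and nobr: "\<And>f. \<exists>n. map f [0..<n] \<notin> P"
    and inP: "\<And>n. \<sigma> n \<in> P"
    and desc: "\<And>n. kbl (\<sigma> (Suc n)) (\<sigma> n)"
  shows False
proof -
  have stab: "\<exists>N. \<forall>n\<ge>N. k \<le> length (\<sigma> n) \<and> take k (\<sigma> n) = take k (\<sigma> N)" for k
  proof (induction k)
    case 0 then show ?case by auto
  next
    case (Suc k)
    then obtain N where N: "\<And>n. n \<ge> N \<Longrightarrow> k \<le> length (\<sigma> n) \<and> take k (\<sigma> n) = take k (\<sigma> N)"
      by blast
    have len: "k < length (\<sigma> n)" if nS: "n \<ge> Suc N" for n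
    proof (rule ccontr)
      assume nl: "\<not> k < length (\<sigma> n)"
      obtain m where m: "n = Suc m" using Suc_le_D[OF nS] by blast
      have nN: "n \<ge> N" "m \<ge> N" using nS m by simp_all
      have Nn: "k \<le> length (\<sigma> n)" "take k (\<sigma> n) = take k (\<sigma> N)" using N[OF nN(1)] by blast+
      have hm: "k \<le> length (\<sigma> m)" "take k (\<sigma> m) = take k (\<sigma> N)" using N[OF nN(2)] by blast+
      have eqk: "length (\<sigma> n) = k" using nl Nn(1) by linarith
      have t1: "take k (\<sigma> n) = \<sigma> n" using eqk by simp
      have sn: "\<sigma> n = take k (\<sigma> m)" using Nn(2) t1 hm(2) by simp
      have d: "kbl (\<sigma> n) (\<sigma> m)" using desc[of m] m by simp
      then have ne: "\<sigma> n \<noteq> \<sigma> m" using kbl_irrefl by metis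
      have "length (\<sigma> m) \<noteq> k"
      proof
        assume "length (\<sigma> m) = k"
        then have "take k (\<sigma> m) = \<sigma> m" by simp
        with sn ne show False by simp
      qed
      then have "length (\<sigma> n) < length (\<sigma> m)" using hm(1) eqk by simp
      moreover have "take (length (\<sigma> n)) (\<sigma> m) = \<sigma> n"
        using sn eqk by simp
      ultimately have "kbl (\<sigma> m) (\<sigma> n)" by (rule kblI1)
      with d show False using kbl_asym by blast
    qed
    define e where "e n = \<sigma> (n + Suc N) ! k" for n
    have "e (Suc n) \<le> e n" for n
    proof (rule ccontr)
      assume "\<not> e (Suc n) \<le> e n"
      then have lt: "\<sigma> (n + Suc N) ! k < \<sigma> (Suc (n + Suc N)) ! k" unfolding e_def by simp
      have "take k (\<sigma> (n + Suc N)) = take k (\<sigma> (Suc (n + Suc N)))"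
        using N[of "n + Suc N"] N[of "Suc (n + Suc N)"] by simp
      then have "kbl (\<sigma> (n + Suc N)) (\<sigma> (Suc (n + Suc N)))"
        using lt len[of "n + Suc N"] len[of "Suc (n + Suc N)"] by (intro kblI2) auto
      then show False using desc[of "n + Suc N"] kbl_asym by blast
    qed
    then obtain M where M: "\<And>n. n \<ge> M \<Longrightarrow> e n = e M" using noninc_stab[of e] by blast
    show ?case
    proof (intro exI allI impI)
      fix n assume n: "n \<ge> M + Suc N"
      have a: "take (Suc k) (\<sigma> n) = take k (\<sigma> n) @ [\<sigma> n ! k]"
        using len[of n] n by (simp add: take_Suc_conv_app_nth)
      have b: "take (Suc k) (\<sigma> (M + Suc N)) = take k (\<sigma> (M + Suc N)) @ [\<sigma> (M + Suc N) ! k]"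
        using len[of "M + Suc N"] by (simp add: take_Suc_conv_app_nth)
      have c: "\<sigma> n ! k = \<sigma> (M + Suc N) ! k"
        using M[of "n - Suc N"] n unfolding e_def by simp
      have d: "take k (\<sigma> n) = take k (\<sigma> (M + Suc N))"
        using N[of n] N[of "M + Suc N"] n by simp
      show "Suc k \<le> length (\<sigma> n) \<and> take (Suc k) (\<sigma> n) = take (Suc k) (\<sigma> (M + Suc N))"
        using a b c d len[of n] n by simp
    qed
  qed
  then obtain N where N: "\<And>k n. n \<ge> N k \<Longrightarrow> k \<le> length (\<sigma> n) \<and> take k (\<sigma> n) = take k (\<sigma> (N k))"
    by metis
  define f where "f j = \<sigma> (N (Suc j)) ! j" for j
  have fj: "\<sigma> n ! j = f j" if "n \<ge> N k" "j < k" for n j k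
  proof -
    define n' where "n' = n + N (Suc j)"
    have "take (Suc j) (\<sigma> n') = take (Suc j) (\<sigma> (N (Suc j)))" using N[of "Suc j" n'] unfolding n'_def by simp
    then have 1: "\<sigma> n' ! j = f j" unfolding f_def by (rule tk3) simp
    have "take k (\<sigma> n') = take k (\<sigma> n)" using N[of k n'] N[of k n] that unfolding n'_def by simp
    then have "\<sigma> n' ! j = \<sigma> n ! j" using that(2) by (rule tk3)
    with 1 show ?thesis by simp
  qed
  have "map f [0..<k] = take k (\<sigma> (N k))" for k
    using N[of k "N k"] fj[of k "N k"] by (intro nth_equalityI) auto
  then have "map f [0..<k] \<in> P" for k using pre inP by simp
  then show False using nobr by blast
qed

definition kbrel :: "nat list set \<Rightarrow> nat list rel" where
  "kbrel P = {(s,t). s \<in> P \<and> t \<in> P \<and> (s = t \<or> kbl s t)}"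

lemma kbrel_wo:
  assumes pre: "\<And>s k. s \<in> P \<Longrightarrow> take k s \<in> P"
    and nobr: "\<And>f. \<exists>n. map f [0..<n] \<notin> P"
  shows "well_order_on P (kbrel P)"
  unfolding well_order_on_def linear_order_on_def partial_order_on_def preorder_on_def
proof (intro conjI)
  show "kbrel P \<subseteq> P \<times> P" unfolding kbrel_def by auto
  show "refl_on P (kbrel P)" unfolding refl_on_def kbrel_def by auto
  show "trans (kbrel P)" unfolding trans_def kbrel_def using kbl_trans by blast
  show "antisym (kbrel P)" unfolding antisym_def kbrel_def using kbl_asym by blast
  show "total_on P (kbrel P)" unfolding total_on_def kbrel_def using kbl_total by blast
  show "wf (kbrel P - Id)"
    unfolding wf_iff_no_infinite_down_chain
  proof
    assume "\<exists>f. \<forall>i. (f (Suc i), f i) \<in> kbrel P - Id"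
    then obtain f where f: "\<And>i. (f (Suc i), f i) \<in> kbrel P - Id" by blast
    show False
    proof (rule kb_no_desc[OF pre nobr])
      show "f n \<in> P" for n using f[of n] unfolding kbrel_def by auto
      show "kbl (f (Suc n)) (f n)" for n using f[of n] unfolding kbrel_def by auto
    qed
  qed
qed

lemma Field_kbrel: "Field (kbrel P) = P"
  unfolding kbrel_def Field_def by auto



definition blt :: "real set \<Rightarrow> 'a bunch \<Rightarrow> 'a bunch \<Rightarrow> bool" where
  "blt E c p \<longleftrightarrow> bunch_le E c p \<and> p \<noteq> c"

definition bchain :: "real set \<Rightarrow> 'a bunch set \<Rightarrow> 'a bunch list \<Rightarrow> bool" where
  "bchain E V s \<longleftrightarrow> set s \<subseteq> V \<and> (\<forall>i. Suc i < length s \<longrightarrow> blt E (s!i) (s!Suc i))"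

lemma bchain_snoc:
  assumes "bchain E V s" "s \<noteq> []" "p \<in> V" "blt E (last s) p"
  shows "bchain E V (s @ [p])"
  unfolding bchain_def
proof (intro conjI allI impI)
  show "set (s @ [p]) \<subseteq> V" using assms unfolding bchain_def by auto
  fix i assume i: "Suc i < length (s @ [p])"
  show "blt E ((s @ [p]) ! i) ((s @ [p]) ! Suc i)"
  proof (cases "Suc i < length s")
    case True
    then show ?thesis using assms(1) unfolding bchain_def by (simp add: nth_append)
  next
    case False
    then have ii: "i = length s - 1" "Suc i = length s" using i by simp_all
    have "(s @ [p]) ! i = last s" using ii assms(2) by (simp add: nth_append last_conv_nth)
    moreover have "(s @ [p]) ! Suc i = p" using ii by (simp add: nth_append)
    ultimately show ?thesis using assms(4) by simp
  qed
qed

lemma bchain_take: "bchain E V s \<Longrightarrow> bchain E V (take k s)"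
  unfolding bchain_def by (auto dest: in_set_takeD)

lemma bchain_single: "c \<in> V \<Longrightarrow> bchain E V [c]"
  unfolding bchain_def by auto

lemma imm_pred_unique:
  assumes wo: "well_order_on (Field r) r" and "immediate_pred r b a" "immediate_pred r b' a"
  shows "b = b'"
proof (rule ccontr)
  assume ne: "b \<noteq> b'"
  have lin: "total_on (Field r) r" using wo unfolding well_order_on_def linear_order_on_def by blast
  have "b \<in> Field r" "b' \<in> Field r" using assms(2,3) unfolding immediate_pred_def Field_def by auto
  then have "(b, b') \<in> r \<or> (b', b) \<in> r" using lin ne unfolding total_on_def by blast
  then show False using assms(2,3) ne unfolding immediate_pred_def by blast
qed

lemma deriv_exists:
  assumes wo: "well_order_on (Field r) r"
  shows "\<exists>D. is_deriv_seq E V r D"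
proof -
  define R where "R = r - Id"
  have wf: "wf R" using wo unfolding well_order_on_def R_def by blast
  define F where "F = (\<lambda>D a. if \<exists>b. immediate_pred r b a then vine_deriv E (D (SOME b. immediate_pred r b a))
        else V \<inter> \<Inter>{D b | b. (b, a) \<in> r \<and> b \<noteq> a})"
  define D where "D = wfrec R F"
  have eq: "D a = F (cut D R a) a" for a unfolding D_def by (rule wfrec[OF wf])
  show ?thesis
  proof (rule exI[of _ D], unfold is_deriv_seq_def, intro conjI ballI allI impI)
    show "well_order_on (Field r) r" by (rule wo)
  next
    fix a b assume ab: "immediate_pred r b a"
    then have some: "(SOME b. immediate_pred r b a) = b"
      using imm_pred_unique[OF wo] by (metis someI)
    have "(b, a) \<in> R" using ab unfolding immediate_pred_def R_def by auto
    then show "D a = vine_deriv E (D b)" using ab eq[of a] some unfolding F_def by (auto simp: cut_apply)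
  next
    fix a assume "\<nexists>b. immediate_pred r b a"
    then have "D a = V \<inter> \<Inter>{cut D R a b | b. (b, a) \<in> r \<and> b \<noteq> a}" using eq[of a] unfolding F_def by simp
    also have "{cut D R a b | b. (b, a) \<in> r \<and> b \<noteq> a} = (\<lambda>b. cut D R a b) ` {b. (b, a) \<in> r \<and> b \<noteq> a}"
      by blast
    also have "\<dots> = D ` {b. (b, a) \<in> r \<and> b \<noteq> a}"
      by (rule image_cong) (auto simp: R_def cut_apply)
    also have "\<dots> = {D b | b. (b, a) \<in> r \<and> b \<noteq> a}" by blast
    finally show "D a = V \<inter> \<Inter>{D b | b. (b, a) \<in> r \<and> b \<noteq> a}" .
  qed
qed

lemma vine_deriv_sub: "vine_deriv E S \<subseteq> S"
  unfolding vine_deriv_def by auto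

lemma D_sub:
  assumes ds: "is_deriv_seq E V r D"
  shows "a \<in> Field r \<Longrightarrow> D a \<subseteq> V"
proof -
  have wo: "well_order_on (Field r) r" using ds unfolding is_deriv_seq_def by blast
  have wf: "wf (r - Id)" using wo unfolding well_order_on_def by blast
  show "a \<in> Field r \<Longrightarrow> D a \<subseteq> V"
  proof (induction a rule: wf_induct[OF wf])
    case (1 a)
    show ?case
    proof (cases "\<exists>b. immediate_pred r b a")
      case True
      then obtain b where b: "immediate_pred r b a" by blast
      then have "D a = vine_deriv E (D b)" using ds 1(2) unfolding is_deriv_seq_def by blast
      moreover have "b \<in> Field r" "(b, a) \<in> r - Id" using b unfolding immediate_pred_def Field_def by auto
      ultimately show ?thesis using 1(1) vine_deriv_sub by blast
    next
      case False
      then show ?thesis using ds 1(2) unfolding is_deriv_seq_def by blast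
    qed
  qed
qed

lemma key:
  assumes ds: "is_deriv_seq E V r D"
    and H: "\<And>s p. bchain E V s \<Longrightarrow> s \<noteq> [] \<Longrightarrow> p \<in> V \<Longrightarrow> blt E (last s) p \<Longrightarrow>
              (\<phi> (s @ [p]), \<phi> s) \<in> r \<and> \<phi> (s @ [p]) \<noteq> \<phi> s"
  shows "a \<in> Field r \<Longrightarrow> bchain E V s \<Longrightarrow> s \<noteq> [] \<Longrightarrow> last s \<in> D a \<Longrightarrow> \<not> ((\<phi> s, a) \<in> r \<and> \<phi> s \<noteq> a)"
proof -
  have wo: "well_order_on (Field r) r" using ds unfolding is_deriv_seq_def by blast
  have wf: "wf (r - Id)" using wo unfolding well_order_on_def by blast
  have lin: "total_on (Field r) r" using wo unfolding well_order_on_def linear_order_on_def by blast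
  show "a \<in> Field r \<Longrightarrow> bchain E V s \<Longrightarrow> s \<noteq> [] \<Longrightarrow> last s \<in> D a \<Longrightarrow> \<not> ((\<phi> s, a) \<in> r \<and> \<phi> s \<noteq> a)"
  proof (induction a arbitrary: s rule: wf_induct[OF wf])
    case (1 a)
    show ?case
    proof
      assume lt: "(\<phi> s, a) \<in> r \<and> \<phi> s \<noteq> a"
      have fs: "\<phi> s \<in> Field r" using lt unfolding Field_def by auto
      show False
      proof (cases "\<exists>b. immediate_pred r b a")
        case True
        then obtain b where b: "immediate_pred r b a" by blast
        then have Da: "D a = vine_deriv E (D b)" using ds 1(2) unfolding is_deriv_seq_def by blast
        have bF: "b \<in> Field r" and bR: "(b, a) \<in> r - Id" using b unfolding immediate_pred_def Field_def by auto
        have cDb: "last s \<in> D b" and ex: "\<exists>p\<in>D b. bunch_le E (last s) p \<and> p \<noteq> last s"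
          using 1(5) unfolding Da vine_deriv_def by auto
        then obtain p where p: "p \<in> D b" "blt E (last s) p" unfolding blt_def by blast
        have pV: "p \<in> V" using p(1) D_sub[OF ds bF] by blast
        have cases: "\<phi> s = b \<or> ((\<phi> s, b) \<in> r \<and> \<phi> s \<noteq> b)"
        proof (rule ccontr)
          assume "\<not> ?thesis"
          then have "(b, \<phi> s) \<in> r" "\<phi> s \<noteq> b" using lin fs bF unfolding total_on_def by blast+
          then show False using b lt unfolding immediate_pred_def by blast
        qed
        then show False
        proof
          assume eq: "\<phi> s = b"
          have ch: "bchain E V (s @ [p])" using bchain_snoc[OF 1(3) 1(4) pV p(2)] .
          have "(\<phi> (s @ [p]), \<phi> s) \<in> r \<and> \<phi> (s @ [p]) \<noteq> \<phi> s" using H[OF 1(3) 1(4) pV p(2)] .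
          then show False using 1(1)[rule_format, OF bR bF ch] p(1) eq by simp
        next
          assume "(\<phi> s, b) \<in> r \<and> \<phi> s \<noteq> b"
          then show False using 1(1)[rule_format, OF bR bF 1(3) 1(4) cDb] by blast
        qed
      next
        case False
        then have Da: "D a = V \<inter> \<Inter>{D b | b. (b, a) \<in> r \<and> b \<noteq> a}" using ds 1(2) unfolding is_deriv_seq_def by blast
        have "\<not> immediate_pred r (\<phi> s) a" using False by blast
        then obtain c where c: "(\<phi> s, c) \<in> r" "(c, a) \<in> r" "c \<noteq> \<phi> s" "c \<noteq> a"
          using lt unfolding immediate_pred_def by blast
        have cF: "c \<in> Field r" using c unfolding Field_def by auto
        have "last s \<in> D c" using 1(5) c unfolding Da by blast
        then show False using 1(1)[rule_format, of c, OF _ cF 1(3) 1(4)] c by blast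
      qed
    qed
  qed
qed

lemma key_empty:
  assumes ds: "is_deriv_seq E V r D"
    and H: "\<And>s p. bchain E V s \<Longrightarrow> s \<noteq> [] \<Longrightarrow> p \<in> V \<Longrightarrow> blt E (last s) p \<Longrightarrow>
              (\<phi> (s @ [p]), \<phi> s) \<in> r \<and> \<phi> (s @ [p]) \<noteq> \<phi> s"
    and top: "tp \<in> Field r" "\<And>c. c \<in> V \<Longrightarrow> (\<phi> [c], tp) \<in> r \<and> \<phi> [c] \<noteq> tp"
  shows "D tp = {}"
proof (rule ccontr)
  assume "D tp \<noteq> {}"
  then obtain c where c: "c \<in> D tp" by blast
  then have cV: "c \<in> V" using D_sub[OF ds top(1)] by blast
  show False using key[OF ds H top(1) bchain_single[OF cV]] c top(2)[OF cV] by simp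
qed



definition zdig :: "(nat \<Rightarrow> 'a::metric_space) \<Rightarrow> nat \<Rightarrow> 'a \<Rightarrow> nat" where
  "zdig q k z = (LEAST j. dist z (q j) < (1/2)^k)"

lemma zdig_dist:
  assumes dense: "\<And>z e. e > 0 \<Longrightarrow> \<exists>j. dist z (q j) < e"
  shows "dist z (q (zdig q k z)) < (1/2)^k"
proof -
  have "\<exists>j. dist z (q j) < (1/2::real)^k" using dense by simp
  then show ?thesis unfolding zdig_def by (rule LeastI_ex)
qed

lemma zdig_eq:
  assumes dense: "\<And>z e. e > 0 \<Longrightarrow> \<exists>j. dist z (q j) < e"
    and eq: "zdig q k z = zdig q k z'"
  shows "dist z z' < 2 * (1/2)^k"
proof -
  have "dist z z' \<le> dist z (q (zdig q k z)) + dist z' (q (zdig q k z))"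
    by (rule dist_triangle2)
  also have "\<dots> < (1/2)^k + (1/2)^k"
    using zdig_dist[OF dense, of z k] zdig_dist[OF dense, of z' k] eq by simp
  finally show ?thesis by simp
qed

lemma dense_seq_exists:
  obtains q :: "nat \<Rightarrow> 'a::polish_space" where "\<And>z e. e > 0 \<Longrightarrow> \<exists>j. dist z (q j) < e"
proof -
  obtain D :: "'a set" where D: "countable D" "\<And>X. open X \<Longrightarrow> X \<noteq> {} \<Longrightarrow> \<exists>d\<in>D. d \<in> X"
    using countable_dense_setE by blast
  show ?thesis
  proof
    fix z :: 'a and e :: real assume e: "e > 0"
    then obtain d where d: "d \<in> D" "d \<in> ball z e" using D(2)[of "ball z e"] by auto
    then obtain j where "from_nat_into D j = d" using from_nat_into_surj[OF D(1)] by blast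
    then show "\<exists>j. dist z (from_nat_into D j) < e" using d by auto
  qed
qed

lemma countable_EG:
  assumes "countable E" "finite G"
  shows "countable (EG E G)"
proof -
  define ext where "ext = (\<lambda>g::nat \<Rightarrow> real. \<lambda>n. if n \<in> G then g n else 0)"
  have "EG E G \<subseteq> ext ` (Pi\<^sub>E G (\<lambda>_. E))"
  proof
    fix f assume f: "f \<in> EG E G"
    have "f = ext (restrict f G)"
      using f unfolding EG_def ext_def by (auto simp: fun_eq_iff)
    moreover have "restrict f G \<in> Pi\<^sub>E G (\<lambda>_. E)" using f unfolding EG_def by auto
    ultimately show "f \<in> ext ` (Pi\<^sub>E G (\<lambda>_. E))" by blast
  qed
  moreover have "countable (ext ` (Pi\<^sub>E G (\<lambda>_. E)))"
    using countable_PiE[OF assms(2), of "\<lambda>_. E"] assms(1) by auto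
  ultimately show ?thesis by (rule countable_subset)
qed

lemma EG_mono: "F \<subseteq> G \<Longrightarrow> EG E F \<subseteq> EG E G"
  unfolding EG_def by auto

lemma bunch_le_refl: "bunch_le E c c"
  unfolding bunch_le_def initial_segment_def by auto

lemma bunch_le_trans:
  assumes ab: "bunch_le E a b" and bc: "bunch_le E b c" shows "bunch_le E a c"
proof -
  have s1: "fst a \<subseteq> fst b" "\<forall>x\<in>fst a. \<forall>y\<in>fst b. y < x \<longrightarrow> y \<in> fst a"
    using ab unfolding bunch_le_def initial_segment_def by blast+
  have s2: "fst b \<subseteq> fst c" "\<forall>x\<in>fst b. \<forall>y\<in>fst c. y < x \<longrightarrow> y \<in> fst b"
    using bc unfolding bunch_le_def initial_segment_def by blast+
  have "initial_segment (fst a) (fst c)"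
    unfolding initial_segment_def using s1 s2 by blast
  moreover have "\<forall>f\<in>EG E (fst a). snd c f = snd a f"
  proof
    fix f assume f: "f \<in> EG E (fst a)"
    then have "f \<in> EG E (fst b)" using EG_mono[OF s1(1)] by blast
    then have "snd c f = snd b f" using bc unfolding bunch_le_def by blast
    also have "\<dots> = snd a f" using f ab unfolding bunch_le_def by blast
    finally show "snd c f = snd a f" .
  qed
  ultimately show ?thesis unfolding bunch_le_def by blast
qed

definition eG :: "real set \<Rightarrow> nat set \<Rightarrow> nat \<Rightarrow> (nat \<Rightarrow> real)" where
  "eG E G = from_nat_into (EG E G)"

definition dig :: "(nat \<Rightarrow> 'a::metric_space) \<Rightarrow> real set \<Rightarrow> 'a bunch \<Rightarrow> nat \<Rightarrow> nat list" where
  "dig q E c k = map (\<lambda>j. zdig q k (snd c (eG E (fst c) j))) [0..<k]"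

definition coden :: "(nat \<Rightarrow> 'a::metric_space) \<Rightarrow> real set \<Rightarrow> nat \<Rightarrow> 'a bunch \<Rightarrow> nat list \<times> nat list list" where
  "coden q E n c = (sorted_list_of_set (fst c), map (dig q E c) [0..<n])"

definition code :: "(nat \<Rightarrow> 'a::metric_space) \<Rightarrow> real set \<Rightarrow> 'a bunch list \<Rightarrow> (nat list \<times> nat list list) list" where
  "code q E s = map (coden q E (length s)) s"

definition cd :: "(nat \<Rightarrow> 'a::metric_space) \<Rightarrow> real set \<Rightarrow> 'a bunch list \<Rightarrow> nat" where
  "cd q E s = to_nat (code q E s)"

definition pth :: "(nat \<Rightarrow> 'a::metric_space) \<Rightarrow> real set \<Rightarrow> 'a bunch list \<Rightarrow> nat list" where
  "pth q E s = map (\<lambda>k. cd q E (take (Suc k) s)) [0..<length s]"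

lemma length_pth [simp]: "length (pth q E s) = length s"
  unfolding pth_def by simp

lemma t1: "i < k \<Longrightarrow> i < length s \<Longrightarrow> take (Suc i) (take k s) = take (Suc i) s" by (simp add: min_def)
lemma t2: "i < k \<Longrightarrow> i < length s \<Longrightarrow> take k (pth q E s) ! i = cd q E (take (Suc i) s)"
    unfolding pth_def by simp
lemma t3: "i < k \<Longrightarrow> i < length s \<Longrightarrow> pth q E (take k s) ! i = cd q E (take (Suc i) (take k s))"
    unfolding pth_def by simp

lemma take_pth: "take k (pth q E s) = pth q E (take k s)"
proof (rule nth_equalityI)
  show "length (take k (pth q E s)) = length (pth q E (take k s))" by simp
  fix i assume "i < length (take k (pth q E s))"
  then have i: "i < k" "i < length s" by auto
  show "take k (pth q E s) ! i = pth q E (take k s) ! i"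
    using t1[OF i] t2[OF i] t3[OF i] by (simp only:)
qed

lemma pth_snoc: "pth q E (s @ [p]) = pth q E s @ [cd q E (s @ [p])]"
proof -
  have "pth q E (s @ [p]) = map (\<lambda>k. cd q E (take (Suc k) (s @ [p]))) [0..<length s] @ [cd q E (take (Suc (length s)) (s @ [p]))]"
    unfolding pth_def by simp
  also have "map (\<lambda>k. cd q E (take (Suc k) (s @ [p]))) [0..<length s] = pth q E s"
    unfolding pth_def by (rule map_cong) auto
  finally show ?thesis by simp
qed


lemma nth_pth: "k < length t \<Longrightarrow> pth q E t ! k = cd q E (take (Suc k) t)"
  unfolding pth_def by simp

lemma nth_code: "i < length t \<Longrightarrow> code q E t ! i = coden q E (length t) (t ! i)"
  unfolding code_def by simp

lemma no_branch:
  fixes V :: "('a::polish_space) bunch set" and q :: "nat \<Rightarrow> 'a"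
  assumes dense: "\<And>z e. e > 0 \<Longrightarrow> \<exists>j. dist z (q j) < e"
    and E: "countable E"
    and vine: "is_vine E V" and closed: "vine_closed E V" and wfd: "vine_well_founded E V"
  shows "\<exists>n. map f [0..<n] \<notin> {pth q E s | s. bchain E V s}"
proof (rule ccontr)
  assume "\<not> ?thesis"
  then have h: "\<forall>n. \<exists>s. map f [0..<n] = pth q E s \<and> bchain E V s"
    by (simp only: not_ex not_not mem_Collect_eq not_all) simp
  obtain s where s0: "\<forall>n. map f [0..<n] = pth q E (s n) \<and> bchain E V (s n)"
    using choice[OF h] by blast
  have s: "\<And>n. bchain E V (s n)" "\<And>n. pth q E (s n) = map f [0..<n]"
    using s0 by auto
  have len: "length (s n) = n" for n
  proof -
    have "length (pth q E (s n)) = n" using s(2)[of n] by simp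
    then show ?thesis by simp
  qed
  have inV: "s n ! i \<in> V" if "i < n" for i n
  proof -
    have "s n ! i \<in> set (s n)" using that len[of n] by (intro nth_mem) simp
    then show ?thesis using s(1)[of n] unfolding bchain_def by blast
  qed
  have bun: "is_bunch E (s n ! i)" if "i < n" for i n
    using vine inV[OF that] unfolding is_vine_def by blast
  have cdf: "cd q E (take (Suc k) (s n)) = f k" if "k < n" for k n
  proof -
    have "pth q E (s n) ! k = f k" using s(2)[of n] that by simp
    then show ?thesis using nth_pth[of k "s n" q E] that len[of n] by simp
  qed
  have codeq: "code q E (take (Suc k) (s n)) = code q E (take (Suc k) (s m))"
    if "k < n" "k < m" for k n m
  proof -
    have "cd q E (take (Suc k) (s n)) = cd q E (take (Suc k) (s m))" using cdf that by simp
    then show ?thesis unfolding cd_def by (rule injD[OF inj_to_nat])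
  qed
  have coden_eq: "coden q E (Suc k) (s n ! i) = coden q E (Suc k) (s m ! i)"
    if "i \<le> k" "k < n" "k < m" for i k n m
  proof -
    have ln: "length (take (Suc k) (s n)) = Suc k" "length (take (Suc k) (s m)) = Suc k"
      using that len[of n] len[of m] by auto
    have "code q E (take (Suc k) (s n)) ! i = code q E (take (Suc k) (s m)) ! i"
      using codeq[OF that(2,3)] by simp
    then have "coden q E (Suc k) (take (Suc k) (s n) ! i) = coden q E (Suc k) (take (Suc k) (s m) ! i)"
      using nth_code[of i "take (Suc k) (s n)" q E] nth_code[of i "take (Suc k) (s m)" q E] ln that(1)
      by simp
    then show ?thesis using that(1) by simp
  qed
  have fst_eq: "fst (s n ! i) = fst (s m ! i)" if "i \<le> k" "k < n" "k < m" for i k n m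
  proof -
    have "sorted_list_of_set (fst (s n ! i)) = sorted_list_of_set (fst (s m ! i))"
      using coden_eq[OF that] unfolding coden_def by simp
    moreover have "finite (fst (s n ! i))" "finite (fst (s m ! i))"
      using bun[of i n] bun[of i m] that unfolding is_bunch_def by auto
    ultimately show ?thesis by (metis sorted_list_of_set.set_sorted_key_list_of_set)
  qed
  have dig_eq: "dig q E (s n ! i) k = dig q E (s m ! i) k" if "i \<le> k" "k < n" "k < m" for i k n m
  proof -
    have "map (dig q E (s n ! i)) [0..<Suc k] = map (dig q E (s m ! i)) [0..<Suc k]"
      using coden_eq[OF that] unfolding coden_def by (simp only: prod.inject)
    then have "\<forall>x\<in>set [0..<Suc k]. dig q E (s n ! i) x = dig q E (s m ! i) x"
      by (simp only: map_eq_conv)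
    then show ?thesis by simp
  qed
  define G where "G i = fst (s (Suc i) ! i)" for i
  have FG: "fst (s n ! i) = G i" if "i < n" for i n
    using fst_eq[of i i n "Suc i"] that unfolding G_def by simp
  have finG: "finite (G i)" for i
    using bun[of i "Suc i"] unfolding is_bunch_def G_def by simp
  have extn: "snd (s n ! i) \<in> extensional (EG E (G i))" if "i < n" for i n
    using bun[OF that] FG[OF that] unfolding is_bunch_def by auto
  have cntG: "countable (EG E (G i))" for i using countable_EG[OF E finG] .
  have coord: "dist (snd (s n ! i) (eG E (G i) j)) (snd (s m ! i) (eG E (G i) j)) < 2 * (1/2)^k"
    if "j < k" "i \<le> k" "k < n" "k < m" for i j k n m
  proof -
    have "dig q E (s n ! i) k ! j = dig q E (s m ! i) k ! j" using dig_eq[OF that(2-4)] by simp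
    then have "zdig q k (snd (s n ! i) (eG E (fst (s n ! i)) j)) = zdig q k (snd (s m ! i) (eG E (fst (s m ! i)) j))"
      using that(1) unfolding dig_def by simp
    moreover have "fst (s n ! i) = G i" "fst (s m ! i) = G i" using FG that by auto
    ultimately have "zdig q k (snd (s n ! i) (eG E (G i) j)) = zdig q k (snd (s m ! i) (eG E (G i) j))"
      by simp
    then show ?thesis using zdig_eq[of q k] dense by blast
  qed
  have cauchy: "Cauchy (\<lambda>n. snd (s n ! i) g)" if g: "g \<in> EG E (G i)" for i g
  proof -
    obtain j where j: "eG E (G i) j = g" using from_nat_into_surj[OF cntG g] unfolding eG_def by blast
    show ?thesis
    proof (rule metric_CauchyI)
      fix e :: real assume e: "e > 0"
      obtain k0 where k0: "(1/2::real)^k0 < e/2" using real_arch_pow_inv[of "e/2" "1/2"] e by auto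
      define k where "k = k0 + i + Suc j"
      have "(1/2::real)^k \<le> (1/2)^k0" unfolding k_def by (rule power_decreasing) auto
      then have ke: "2 * (1/2::real)^k < e" using k0 by linarith
      show "\<exists>M. \<forall>m\<ge>M. \<forall>n\<ge>M. dist (snd (s m ! i) g) (snd (s n ! i) g) < e"
      proof (intro exI allI impI)
        fix m n assume "m \<ge> Suc k" "n \<ge> Suc k"
        then have "dist (snd (s m ! i) (eG E (G i) j)) (snd (s n ! i) (eG E (G i) j)) < 2 * (1/2)^k"
          by (intro coord) (auto simp: k_def)
        then show "dist (snd (s m ! i) g) (snd (s n ! i) g) < e" using ke j by simp
      qed
    qed
  qed
  define y where "y i = restrict (\<lambda>g. lim (\<lambda>n. snd (s n ! i) g)) (EG E (G i))" for i
  have ylim: "(\<lambda>n. snd (s n ! i) g) \<longlonglongrightarrow> y i g" if g: "g \<in> EG E (G i)" for i g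
  proof -
    have "convergent (\<lambda>n. snd (s n ! i) g)" using Cauchy_convergent[OF cauchy[OF g]] .
    then show ?thesis unfolding y_def using g by (simp add: convergent_LIMSEQ_iff)
  qed
  define c where "c i = (G i, y i)" for i
  have cV: "c i \<in> V" for i
  proof -
    have lim: "limitin (product_topology (\<lambda>_. euclidean) (EG E (G i))) (\<lambda>n. snd (s n ! i)) (y i) sequentially"
      unfolding limitin_componentwise
    proof (intro conjI ballI)
      show "y i \<in> extensional (EG E (G i))" unfolding y_def by simp
      show "\<forall>\<^sub>F n in sequentially. snd (s n ! i) \<in> topspace (product_topology (\<lambda>_. euclidean) (EG E (G i)))"
        unfolding eventually_sequentially
        using extn by (intro exI[of _ "Suc i"]) (auto simp: PiE_def)
      fix g assume "g \<in> EG E (G i)"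
      then show "limitin euclidean (\<lambda>n. snd (s n ! i) g) (y i g) sequentially" using ylim by simp
    qed
    have cl: "closedin (product_topology (\<lambda>_. euclidean) (EG E (G i))) {x. (G i, x) \<in> V}"
      using closed finG unfolding vine_closed_def by blast
    have ev: "\<forall>\<^sub>F n in sequentially. snd (s n ! i) \<in> {x. (G i, x) \<in> V}"
      unfolding eventually_sequentially
    proof (intro exI allI impI)
      fix n assume "n \<ge> Suc i"
      then have "i < n" by simp
      then have "(G i, snd (s n ! i)) = s n ! i" using FG[of i n] by (metis prod.collapse)
      then show "snd (s n ! i) \<in> {x. (G i, x) \<in> V}" using inV[OF \<open>i < n\<close>] by simp
    qed
    have "y i \<in> {x. (G i, x) \<in> V}" by (rule limitin_closedin[OF lim cl ev]) simp
    then show ?thesis unfolding c_def by simp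
  qed
  have chain_n: "blt E (s n ! i) (s n ! Suc i)" if "Suc i < n" for i n
    using s(1)[of n] that len[of n] unfolding bchain_def by auto
  have seg: "initial_segment (G i) (G (Suc i))" for i
  proof -
    have "bunch_le E (s (Suc (Suc i)) ! i) (s (Suc (Suc i)) ! Suc i)"
      using chain_n[of i "Suc (Suc i)"] unfolding blt_def by simp
    then show ?thesis using FG[of i "Suc (Suc i)"] FG[of "Suc i" "Suc (Suc i)"] unfolding bunch_le_def by simp
  qed
  have Gne: "G i \<noteq> G (Suc i)" for i
  proof
    assume eq: "G i = G (Suc i)"
    define a where "a = s (Suc (Suc i)) ! i"
    define b where "b = s (Suc (Suc i)) ! Suc i"
    have ab: "bunch_le E a b" "b \<noteq> a" using chain_n[of i "Suc (Suc i)"] unfolding blt_def a_def b_def by auto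
    have fa: "fst a = G i" "fst b = G i" using FG[of i "Suc (Suc i)"] FG[of "Suc i" "Suc (Suc i)"] eq
      unfolding a_def b_def by auto
    have ea: "snd a \<in> extensional (EG E (G i))" "snd b \<in> extensional (EG E (G i))"
      using extn[of i "Suc (Suc i)"] extn[of "Suc i" "Suc (Suc i)"] eq unfolding a_def b_def by auto
    have "\<forall>g\<in>EG E (G i). snd b g = snd a g" using ab(1) fa unfolding bunch_le_def by simp
    then have "snd b = snd a" using ea by (intro extensionalityI[of _ "EG E (G i)"]) auto
    then have "b = a" using fa by (simp add: prod_eq_iff)
    then show False using ab(2) by simp
  qed
  have agree: "y (Suc i) g = y i g" if g: "g \<in> EG E (G i)" for i g
  proof -
    have sub: "G i \<subseteq> G (Suc i)" using seg[of i] unfolding initial_segment_def by blast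
    then have g': "g \<in> EG E (G (Suc i))" using EG_mono g by blast
    have ev: "\<forall>\<^sub>F n in sequentially. snd (s n ! Suc i) g = snd (s n ! i) g"
      unfolding eventually_sequentially
    proof (intro exI allI impI)
      fix n assume n: "n \<ge> Suc (Suc i)"
      then have "bunch_le E (s n ! i) (s n ! Suc i)" using chain_n[of i n] unfolding blt_def by simp
      then show "snd (s n ! Suc i) g = snd (s n ! i) g" using FG[of i n] n g unfolding bunch_le_def by simp
    qed
    have "(\<lambda>n. snd (s n ! i) g) \<longlonglongrightarrow> y (Suc i) g"
      using iffD1[OF tendsto_cong[OF ev] ylim[OF g']] .
    then show ?thesis using ylim[OF g] LIMSEQ_unique by blast
  qed
  have blt_c: "blt E (c i) (c (Suc i))" for i
    unfolding blt_def bunch_le_def c_def using seg[of i] agree[of _ i] Gne[of i] by auto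
  have le_c: "bunch_le E (c i) (c j)" if "i \<le> j" for i j
    using that
  proof (induction j rule: dec_induct)
    case base then show ?case by (rule bunch_le_refl)
  next
    case (step j) then show ?case using blt_c[of j] unfolding blt_def using bunch_le_trans by blast
  qed
  have Gsub: "G i \<subset> G j" if "i < j" for i j
  proof -
    have "Suc i \<le> j" using that by simp
    then show ?thesis
    proof (induction j rule: dec_induct)
      case base then show ?case using seg[of i] Gne[of i] unfolding initial_segment_def by blast
    next
      case (step j) then show ?case using seg[of j] Gne[of j] unfolding initial_segment_def by blast
    qed
  qed
  have injc: "inj c"
  proof (rule injI)
    fix i j assume "c i = c j"
    then have "G i = G j" unfolding c_def by simp
    then show "i = j" using Gsub[of i j] Gsub[of j i] by (metis linorder_neqE_nat less_irrefl)
  qed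
  have "range c \<subseteq> V" using cV by blast
  moreover have "infinite (range c)" using range_inj_infinite[OF injc] .
  moreover have "\<forall>a\<in>range c. \<forall>b\<in>range c. bunch_le E a b \<or> bunch_le E b a"
    using le_c by (metis imageE nat_le_linear)
  ultimately show False using wfd unfolding vine_well_founded_def by blast
qed


theorem proposition3p2:
  fixes E :: "real set" and V :: "('a::polish_space) bunch set"
  assumes "countable E" and "0 \<in> E"
    and "is_vine E V" and "vine_closed E V"
    and "vine_well_founded E V"
  shows "index_lt_omega1 E V"
proof -
  obtain q :: "nat \<Rightarrow> 'a" where dense: "\<And>z e. e > 0 \<Longrightarrow> \<exists>j. dist z (q j) < e"
    using dense_seq_exists by blast
  define P where "P = {pth q E s | s. bchain E V s}"
  have pre: "take k \<sigma> \<in> P" if sP: "\<sigma> \<in> P" for \<sigma> k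
  proof -
    obtain s where s: "\<sigma> = pth q E s" "bchain E V s" using sP unfolding P_def by blast
    have "take k \<sigma> = pth q E (take k s)" using s(1) take_pth by simp
    then show ?thesis using bchain_take[OF s(2)] unfolding P_def by blast
  qed
  have nobr: "\<exists>n. map f [0..<n] \<notin> P" for f
    using no_branch[OF dense assms(1) assms(3) assms(4) assms(5)] unfolding P_def .
  have woP: "well_order_on P (kbrel P)" using kbrel_wo[OF pre nobr] .
  define r where "r = dir_image (kbrel P) to_nat"
  have wo: "well_order_on (Field r) r"
    unfolding r_def by (rule Well_order_dir_image) (use woP Field_kbrel[of P] in auto)
  have Fr: "Field r = to_nat ` P" unfolding r_def dir_image_Field Field_kbrel ..
  obtain D where ds: "is_deriv_seq E V r D" using deriv_exists[OF wo] by blast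
  define \<phi> where "\<phi> s = to_nat (pth q E s)" for s
  have mem: "(to_nat a, to_nat b) \<in> r" if "(a, b) \<in> kbrel P" for a b
    using that unfolding r_def dir_image_def by blast
  have H: "(\<phi> (s @ [p]), \<phi> s) \<in> r \<and> \<phi> (s @ [p]) \<noteq> \<phi> s"
    if "bchain E V s" "s \<noteq> []" "p \<in> V" "blt E (last s) p" for s p
  proof
    have ch: "bchain E V (s @ [p])" using bchain_snoc[OF that] .
    have inP: "pth q E (s @ [p]) \<in> P" "pth q E s \<in> P" using ch that(1) unfolding P_def by blast+
    have k: "kbl (pth q E (s @ [p])) (pth q E s)"
      by (rule kblI1) (simp_all add: pth_snoc)
    show "(\<phi> (s @ [p]), \<phi> s) \<in> r" unfolding \<phi>_def
      by (rule mem) (use inP k in \<open>simp add: kbrel_def\<close>)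
    have "pth q E (s @ [p]) \<noteq> pth q E s" by (simp add: pth_snoc)
    then show "\<phi> (s @ [p]) \<noteq> \<phi> s" unfolding \<phi>_def by (simp add: inj_eq)
  qed
  have eP: "[] \<in> P"
  proof -
    have "[] = pth q E []" unfolding pth_def by simp
    moreover have "bchain E V []" unfolding bchain_def by simp
    ultimately show ?thesis unfolding P_def by blast
  qed
  have topF: "to_nat ([] :: nat list) \<in> Field r" using eP Fr by blast
  have top: "(\<phi> [c], to_nat ([] :: nat list)) \<in> r \<and> \<phi> [c] \<noteq> to_nat ([] :: nat list)" if "c \<in> V" for c
  proof
    have inP: "pth q E [c] \<in> P" using bchain_single[OF that] unfolding P_def by blast
    have pc: "pth q E [c] = [cd q E [c]]" unfolding pth_def by simp
    have k: "kbl (pth q E [c]) []" unfolding pc by (rule kblI1) simp_all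
    show "(\<phi> [c], to_nat ([] :: nat list)) \<in> r" unfolding \<phi>_def
      by (rule mem) (use inP eP k in \<open>simp add: kbrel_def\<close>)
    show "\<phi> [c] \<noteq> to_nat ([] :: nat list)" unfolding \<phi>_def pc by (simp add: inj_eq)
  qed
  have "D (to_nat ([] :: nat list)) = {}"
    by (rule key_empty[OF ds H topF top]) auto
  then show ?thesis unfolding index_lt_omega1_def using ds topF by blast
qed

end
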